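(* Let $m\ge 3$, let $K\ne\Delta_{[m]}$ be a simplicial complex on $[m]$ with $\{m\}\in K$, and let $L=K\cap 2^{[m-1]}$, regarded as a simplicial complex on $[m-1]$, with $L\ne\Delta_{[m-1]}$. Then $K$ is the cone over $L$ with apex $m$ (i.e. $K=\{\sigma,\sigma\cup\{m\}:\sigma\in L\}$) if and only if $$\mathrm{Bier}(L)=\mathrm{Bier}(K)\cap 2^{[m-1]\sqcup[(m-1)']},$$ where $\mathrm{Bier}(L)$ is formed using the Alexander dual of $L$ on $[(m-1)']$.
   Context: A simplicial complex $K$ on $[m]=\{1,\dots,m\}$ is a nonempty family of subsets of $[m]$ closed under taking subsets. $\Delta_{[n]}=2^{[n]}$. Let $[n']=\{1',\dots,n'\}$ be a disjoint copy of $[n]$, $I'=\{i':i\in I\}$. For a complex $K\ne\Delta_{[n]}$ on $[n]$ the Alexander dual $K^\vee$ is the complex on $[n']$ with $J'\in K^\vee$ iff $[n]\setminus J\notin K$. The Bier sphere $\mathrm{Bier}(K)$ is the complex on $[n]\sqcup[n']$ with faces $I\sqcup J'$, $I\in K$, $J'\in K^\vee$, $I\cap J=\varnothing$. *)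

theory Defs
  imports Main
begin

text \<open>Vertex set [n] is {1..n}. The disjoint union [n] \<sqcup> [n'] is modelled in the sum type
  nat + nat: Inl i stands for i and Inr i stands for i'.\<close>

definition simplicial_complex :: "nat \<Rightarrow> nat set set \<Rightarrow> bool" where
  "simplicial_complex m K \<longleftrightarrow> K \<noteq> {} \<and> (\<forall>\<sigma>\<in>K. \<sigma> \<subseteq> {1..m}) \<and>
     (\<forall>\<sigma>\<in>K. \<forall>\<tau>. \<tau> \<subseteq> \<sigma> \<longrightarrow> \<tau> \<in> K)"

definition full_simplex :: "nat \<Rightarrow> nat set set" where
  "full_simplex n = Pow {1..n}"

definition alexander_dual :: "nat \<Rightarrow> nat set set \<Rightarrow> (nat + nat) set set" where
  "alexander_dual n K = {Inr ` J | J. J \<subseteq> {1..n} \<and> {1..n} - J \<notin> K}"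

definition bier :: "nat \<Rightarrow> nat set set \<Rightarrow> (nat + nat) set set" where
  "bier n K = {Inl ` I \<union> Inr ` J | I J. I \<in> K \<and> Inr ` J \<in> alexander_dual n K \<and> I \<inter> J = {}}"

definition cone :: "nat \<Rightarrow> nat set set \<Rightarrow> nat set set" where
  "cone v L = L \<union> {insert v \<sigma> | \<sigma>. \<sigma> \<in> L}"

end

theory Submission
  imports Defs
begin

lemma inl_inr_eq:
  "(Inl ` I \<union> Inr ` J :: (nat+nat) set) = Inl ` I' \<union> Inr ` J' \<Longrightarrow> I = I' \<and> J = J'"
proof -
  assume e: "(Inl ` I \<union> Inr ` J :: (nat+nat) set) = Inl ` I' \<union> Inr ` J'"
  have a: "\<And>I J. I = Inl -` (Inl ` I \<union> Inr ` J :: (nat+nat) set)" by auto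
  have b: "\<And>I J. J = Inr -` (Inl ` I \<union> Inr ` J :: (nat+nat) set)" by auto
  show ?thesis using a[of I J] a[of I' J'] b[of J I] b[of J' I'] e by metis
qed

lemma bier_mem:
  "Inl ` I \<union> Inr ` J \<in> bier n K \<longleftrightarrow> I \<in> K \<and> J \<subseteq> {1..n} \<and> {1..n} - J \<notin> K \<and> I \<inter> J = {}"
proof
  assume "Inl ` I \<union> Inr ` J \<in> bier n K"
  then have "\<exists>I' J'. Inl ` I \<union> Inr ` J = Inl ` I' \<union> Inr ` J' \<and> I' \<in> K \<and> Inr ` J' \<in> alexander_dual n K \<and> I' \<inter> J' = {}"
    unfolding bier_def mem_Collect_eq .
  then obtain I' J' where e: "Inl ` I \<union> Inr ` J = Inl ` I' \<union> Inr ` J'" and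
    h: "I' \<in> K" "Inr ` J' \<in> alexander_dual n K" "I' \<inter> J' = {}"
    by (elim exE conjE)
  from inl_inr_eq[OF e] have II: "I = I'" "J = J'" by auto
  have j2: "J' \<subseteq> {1..n} \<and> {1..n} - J' \<notin> K" using h(2) unfolding alexander_dual_def
    by (simp add: inj_image_eq_iff)
  then show "I \<in> K \<and> J \<subseteq> {1..n} \<and> {1..n} - J \<notin> K \<and> I \<inter> J = {}"
    using h II by simp
next
  assume a: "I \<in> K \<and> J \<subseteq> {1..n} \<and> {1..n} - J \<notin> K \<and> I \<inter> J = {}"
  then have "Inr ` J \<in> alexander_dual n K"
    unfolding alexander_dual_def mem_Collect_eq by (intro exI[of _ J]) simp
  then show "Inl ` I \<union> Inr ` J \<in> bier n K"
    unfolding bier_def mem_Collect_eq using a by (intro exI[of _ I] exI[of _ J]) simp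
qed

lemma bier_elem: "x \<in> bier n K \<Longrightarrow> \<exists>I J. x = Inl ` I \<union> Inr ` J"
  unfolding bier_def mem_Collect_eq by blast

theorem mainTheorem6:
  fixes m :: nat and K :: "nat set set"
  assumes "m \<ge> 3"
    and "simplicial_complex m K"
    and "K \<noteq> full_simplex m"
    and "{m} \<in> K"
    and "K \<inter> Pow {1..m-1} \<noteq> full_simplex (m-1)"
  shows "K = cone m (K \<inter> Pow {1..m-1}) \<longleftrightarrow>
         bier (m-1) (K \<inter> Pow {1..m-1}) =
           bier m K \<inter> Pow (Inl ` {1..m-1} \<union> Inr ` {1..m-1})"
proof -
  define n where "n = m - 1"
  define L where "L = K \<inter> Pow {1..n}"
  have mn: "{1..m} = insert m {1..n}" "m \<notin> {1..n}" using assms(1) by (auto simp: n_def)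
  have sub: "\<And>\<sigma> \<tau>. \<sigma> \<in> K \<Longrightarrow> \<tau> \<subseteq> \<sigma> \<Longrightarrow> \<tau> \<in> K"
    and inm: "\<And>\<sigma>. \<sigma> \<in> K \<Longrightarrow> \<sigma> \<subseteq> {1..m}"
    using assms(2) unfolding simplicial_complex_def by blast+
  have emp: "{} \<in> K" using assms(4) sub by blast
  define P where "P \<longleftrightarrow> (\<forall>S\<subseteq>{1..n}. S \<in> K \<longleftrightarrow> insert m S \<in> K)"
  have diff: "\<And>J. J \<subseteq> {1..n} \<Longrightarrow> {1..m} - J = insert m ({1..n} - J)"
    using mn by auto
  have c1: "K = cone m L \<longleftrightarrow> P"
  proof
    assume c: "K = cone m L"
    show P unfolding P_def
    proof (intro allI impI iffI)
      fix S assume "S \<subseteq> {1..n}" "S \<in> K"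
      then have "S \<in> L" by (auto simp: L_def)
      then show "insert m S \<in> K" by (subst c) (auto simp: cone_def)
    next
      fix S assume "S \<subseteq> {1..n}" "insert m S \<in> K"
      then show "S \<in> K" using sub by blast
    qed
  next
    assume P
    show "K = cone m L"
    proof
      show "K \<subseteq> cone m L"
      proof
        fix \<sigma> assume s: "\<sigma> \<in> K"
        show "\<sigma> \<in> cone m L"
        proof (cases "m \<in> \<sigma>")
          case True
          have "\<sigma> - {m} \<in> K" using sub s by blast
          moreover have "\<sigma> - {m} \<subseteq> {1..n}" using inm[OF s] mn by auto
          ultimately have "\<sigma> - {m} \<in> L" by (auto simp: L_def)
          moreover have "\<sigma> = insert m (\<sigma> - {m})" using True by auto
          ultimately show ?thesis unfolding cone_def by blast
        next
          case False
          then have "\<sigma> \<subseteq> {1..n}" using inm[OF s] mn by auto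
          then show ?thesis using s by (auto simp: cone_def L_def)
        qed
      qed
      show "cone m L \<subseteq> K"
        using \<open>P\<close> unfolding cone_def L_def P_def by auto
    qed
  qed
  have c2: "bier n L = bier m K \<inter> Pow (Inl ` {1..n} \<union> Inr ` {1..n}) \<longleftrightarrow> P"
  proof
    assume e: "bier n L = bier m K \<inter> Pow (Inl ` {1..n} \<union> Inr ` {1..n})"
    show P unfolding P_def
    proof (intro allI impI)
      fix S assume S: "S \<subseteq> {1..n}"
      define J where "J = {1..n} - S"
      have J: "J \<subseteq> {1..n}" "{1..n} - J = S" using S by (auto simp: J_def)
      have "{} \<in> L" using emp by (auto simp: L_def)
      have Jm: "J \<subseteq> {1..m}" using J mn by auto
      have r1: "Inr ` J \<in> bier n L \<longleftrightarrow> {1..n} - J \<notin> L"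
        using bier_mem[of "{}" J n L] J(1) \<open>{} \<in> L\<close> by simp
      have r2: "Inr ` J \<in> bier m K \<longleftrightarrow> {1..m} - J \<notin> K"
        using bier_mem[of "{}" J m K] Jm emp by simp
      have r3: "Inr ` J \<in> Pow (Inl ` {1..n} \<union> Inr ` {1..n})" using J(1) by blast
      have "(S \<notin> L) = (insert m S \<notin> K)"
      proof -
        have "Inr ` J \<in> bier n L \<longleftrightarrow> Inr ` J \<in> bier m K \<inter> Pow (Inl ` {1..n} \<union> Inr ` {1..n})"
          by (simp only: e)
        then have "Inr ` J \<in> bier n L \<longleftrightarrow> Inr ` J \<in> bier m K" using r3 by simp
        then show ?thesis using r1 r2 diff[OF J(1)] J(2) by simp
      qed
      then show "S \<in> K \<longleftrightarrow> insert m S \<in> K" using S by (auto simp: L_def)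
    qed
  next
    assume P
    have key: "\<And>J. J \<subseteq> {1..n} \<Longrightarrow> ({1..n} - J \<in> L) = ({1..m} - J \<in> K)"
    proof -
      fix J :: "nat set" assume J: "J \<subseteq> {1..n}"
      have "{1..n} - J \<subseteq> {1..n}" by blast
      then have "({1..n} - J \<in> K) = (insert m ({1..n} - J) \<in> K)"
        using \<open>P\<close> unfolding P_def by blast
      then show "({1..n} - J \<in> L) = ({1..m} - J \<in> K)"
        unfolding diff[OF J] L_def by blast
    qed
    show "bier n L = bier m K \<inter> Pow (Inl ` {1..n} \<union> Inr ` {1..n})"
    proof (intro set_eqI iffI)
      fix x assume x: "x \<in> bier n L"
      obtain I J where xe: "x = Inl ` I \<union> Inr ` J" using bier_elem[OF x] by blast
      from x[unfolded xe bier_mem] have h: "I \<in> L" "J \<subseteq> {1..n}" "{1..n} - J \<notin> L" "I \<inter> J = {}"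
        by simp_all
      have I: "I \<subseteq> {1..n}" using h(1) by (simp add: L_def)
      have "I \<in> K" using h(1) by (simp add: L_def)
      moreover have "J \<subseteq> {1..m}" using h(2) mn by auto
      moreover have "{1..m} - J \<notin> K" using key[OF h(2)] h(3) by simp
      ultimately have "x \<in> bier m K" unfolding xe bier_mem using h(4) by simp
      moreover have "x \<subseteq> Inl ` {1..n} \<union> Inr ` {1..n}" unfolding xe using I h(2) by blast
      ultimately show "x \<in> bier m K \<inter> Pow (Inl ` {1..n} \<union> Inr ` {1..n})" by simp
    next
      fix x assume x: "x \<in> bier m K \<inter> Pow (Inl ` {1..n} \<union> Inr ` {1..n})"
      have xs: "x \<subseteq> Inl ` {1..n} \<union> Inr ` {1..n}" "x \<in> bier m K" using x by simp_all
      obtain I J where xe: "x = Inl ` I \<union> Inr ` J" using bier_elem[OF xs(2)] by blast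
      have I: "I \<subseteq> {1..n}"
      proof
        fix i assume "i \<in> I"
        then have "Inl i \<in> x" using xe by simp
        then have "Inl i \<in> Inl ` {1..n} \<union> Inr ` {1..n}" using xs(1) by (rule subsetD[rotated])
        then show "i \<in> {1..n}" by auto
      qed
      have J: "J \<subseteq> {1..n}"
      proof
        fix i assume "i \<in> J"
        then have "Inr i \<in> x" using xe by simp
        then have "Inr i \<in> Inl ` {1..n} \<union> Inr ` {1..n}" using xs(1) by (rule subsetD[rotated])
        then show "i \<in> {1..n}" by auto
      qed
      from xs(2)[unfolded xe bier_mem] have h: "I \<in> K" "{1..m} - J \<notin> K" "I \<inter> J = {}"
        by simp_all
      have "I \<in> L" using h(1) I by (simp add: L_def)
      moreover have "{1..n} - J \<notin> L" using key[OF J] h(2) by simp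
      ultimately show "x \<in> bier n L"
        unfolding xe bier_mem using J h(3) by simp
    qed
  qed
  show ?thesis using c1 c2 unfolding n_def L_def by simp
qed

end
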